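(* Let $f\in C^1(\mathbb{R}^n,\mathbb{R}^n)$, $g\in C(\mathbb{R}\times\mathbb{R}^n\times[0,1],\mathbb{R}^n)$, and let $x_0$ be a nondegenerate $T$-periodic limit cycle of $\dot x=f(x)$, $T>0$. Let $x_\varepsilon$ ($\varepsilon\in(0,\varepsilon_0]$) be $T$-periodic solutions of $\dot x=f(x)+\varepsilon g(t,x,\varepsilon)$ with $\|x_\varepsilon(t+\Delta_\varepsilon)-x_0(t)\|\le M\varepsilon$ for all $t\in[0,T]$, $\varepsilon\in(0,\varepsilon_0]$, for some $M,\varepsilon_0>0$ and reals $\Delta_\varepsilon\to0$. Suppose there is an eigenfunction $z$ of $\dot z=-(f'(x_0(t)))^*z$ which is not $T$-periodic, with multiplier $\rho$, such that $M^\perp_z(t):=\frac{\rho}{\rho-1}\int_{t-T}^t\langle z(s),g(s,x_0(s),0)\rangle ds\neq0$ for all $t\in[0,T]$. Then there exist $0<c_1\le c_2$ such that for all sufficiently small $\varepsilon>0$, $$c_1\varepsilon\le\|x_\varepsilon(t+\Delta_\varepsilon)-x_0(t)\|\le c_2\varepsilon\quad\text{for all }t\in[0,T].$$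
   Context: Nondegenerate: the characteristic multiplier $+1$ of $\dot y=f'(x_0(t))y$ (eigenvalue $1$ of $Y(T)$, $Y(0)=I$) has algebraic multiplicity $1$. An eigenfunction of a linear $T$-periodic system is a nonzero solution $z$ with $z(t+T)=\rho z(t)$ for all $t$ and some $\rho\in\mathbb{R}$ (its characteristic multiplier). *)

theory Defs
  imports "HOL-Analysis.Analysis" "HOL-Computational_Algebra.Polynomial"
begin

definition charpoly :: "real^'n^'n \<Rightarrow> real poly" where
  "charpoly A = det (\<chi> i j. (if i = j then [:0, 1:] else 0) - [:A $ i $ j:])"

definition alg_mult :: "real^'n^'n \<Rightarrow> real \<Rightarrow> nat" where
  "alg_mult A \<mu> = order \<mu> (charpoly A)"

definition periodic_solution ::
  "(real^'n \<Rightarrow> real^'n) \<Rightarrow> real \<Rightarrow> (real \<Rightarrow> real^'n) \<Rightarrow> bool" where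
  "periodic_solution f T x \<longleftrightarrow> T > 0 \<and>
     (\<forall>t. (x has_vector_derivative f (x t)) (at t)) \<and> (\<forall>t. x (t + T) = x t)"

text \<open>Limit cycle: a nonconstant T-periodic solution whose orbit is isolated, i.e. some
  neighbourhood of the orbit contains no other periodic orbit (of any period).\<close>
definition limit_cycle ::
  "(real^'n \<Rightarrow> real^'n) \<Rightarrow> real \<Rightarrow> (real \<Rightarrow> real^'n) \<Rightarrow> bool" where
  "limit_cycle f T x0 \<longleftrightarrow> periodic_solution f T x0 \<and> (\<exists>s t. x0 s \<noteq> x0 t) \<and>
     (\<exists>e>0. \<forall>y p. periodic_solution f p y \<and> (\<forall>t. infdist (y t) (range x0) < e)
                   \<longrightarrow> range y = range x0)"

text \<open>Nondegenerate: the principal fundamental matrix Y (Y(0) = I) of the variational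
  equation y' = f'(x0 t) y has eigenvalue 1 of algebraic multiplicity 1 at time T.
  Here J is the Jacobian matrix of f.\<close>
definition nondegenerate ::
  "(real^'n \<Rightarrow> real^'n^'n) \<Rightarrow> real \<Rightarrow> (real \<Rightarrow> real^'n) \<Rightarrow> bool" where
  "nondegenerate J T x0 \<longleftrightarrow> (\<exists>Y :: real \<Rightarrow> real^'n^'n. Y 0 = mat 1 \<and>
     (\<forall>t. (Y has_vector_derivative (J (x0 t) ** Y t)) (at t)) \<and> alg_mult (Y T) 1 = 1)"

definition eigenfunction ::
  "(real \<Rightarrow> real^'n^'n) \<Rightarrow> real \<Rightarrow> (real \<Rightarrow> real^'n) \<Rightarrow> real \<Rightarrow> bool" where
  "eigenfunction A T z \<rho> \<longleftrightarrow> (\<exists>t. z t \<noteq> 0) \<and>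
     (\<forall>t. (z has_vector_derivative (A t *v z t)) (at t)) \<and> (\<forall>t. z (t + T) = \<rho> *\<^sub>R z t)"

end

theory Submission imports Defs begin

lemma vderiv_inner:
  fixes f g :: "real \<Rightarrow> 'a::real_inner"
  assumes "(f has_vector_derivative f') (at t)" "(g has_vector_derivative g') (at t)"
  shows "((\<lambda>s. f s \<bullet> g s) has_vector_derivative (f t \<bullet> g' + f' \<bullet> g t)) (at t)"
proof -
  have "((\<lambda>s. f s \<bullet> g s) has_derivative (\<lambda>h. f t \<bullet> (h *\<^sub>R g') + (h *\<^sub>R f') \<bullet> g t)) (at t)"
    using assms unfolding has_vector_derivative_def by (rule has_derivative_inner)
  then show ?thesis unfolding has_vector_derivative_def
    by (rule has_derivative_eq_rhs) (auto simp: algebra_simps)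
qed

lemma neg_mv: "(- A) *v v = - (A *v (v::real^'n))" for A :: "real^'n^'m"
  using matrix_vector_mult_diff_rdistrib[of 0 A v] by simp

lemma onorm_mat_le: "onorm ((*v) (A::real^'n^'m)) \<le> real CARD('m) * real CARD('n) * norm A"
  apply (rule onorm_le_matrix_component)
  by (rule order_trans[OF component_le_norm_cart Finite_Cartesian_Product.norm_nth_le])

lemma linearization_uniform:
  fixes f :: "real^'n \<Rightarrow> real^'n" and J :: "real^'n \<Rightarrow> real^'n^'n"
  assumes f_deriv: "\<And>y. (f has_derivative (\<lambda>h. J y *v h)) (at y)"
    and J_cont: "continuous_on UNIV J" and K: "compact K" and eta: "\<eta> > 0"
  shows "\<exists>r>0. \<forall>b\<in>K. \<forall>a. norm (a - b) \<le> r \<longrightarrow> norm (f a - f b - J b *v (a - b)) \<le> \<eta> * norm (a - b)"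
proof -
  obtain R where R: "\<And>y. y \<in> K \<Longrightarrow> norm y \<le> R"
    using compact_imp_bounded[OF K] bounded_iff by blast
  define C where "C = real CARD('n) * real CARD('n)"
  have C: "C > 0" unfolding C_def by simp
  have "uniformly_continuous_on (cball 0 (R+1)) J"
    by (rule compact_uniformly_continuous) (auto intro: continuous_on_subset[OF J_cont])
  then have UC: "\<forall>e>0. \<exists>d>0. \<forall>y\<in>cball 0 (R+1). \<forall>y'\<in>cball 0 (R+1). dist y' y < d \<longrightarrow> dist (J y') (J y) < e"
    unfolding uniformly_continuous_on_def .
  have "\<eta> / C > 0" using eta C by simp
  from UC[rule_format, OF this] obtain d where d: "d > 0" and dJ: "\<And>y y'. y \<in> cball 0 (R+1) \<Longrightarrow> y' \<in> cball 0 (R+1) \<Longrightarrow>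
      dist y' y < d \<Longrightarrow> dist (J y') (J y) < \<eta> / C"
    by blast
  define r where "r = min 1 (d/2)"
  have r: "r > 0" "r \<le> 1" "r < d" using d by (auto simp: r_def)
  show ?thesis
  proof (intro exI[of _ r] conjI ballI allI impI)
    fix b a assume b: "b \<in> K" and ab: "norm (a - b) \<le> r"
    have sub: "cball b r \<subseteq> cball 0 (R+1)"
    proof
      fix y assume "y \<in> cball b r"
      then have "norm (y - b) \<le> 1" using r by (auto simp: dist_norm norm_minus_commute)
      moreover have "norm y \<le> norm b + norm (y - b)" by (metis add_diff_cancel_left' norm_triangle_sub add.commute)
      ultimately show "y \<in> cball 0 (R+1)" using R[OF b] by auto
    qed
    have "norm (f a - f b - J b *v (a - b)) \<le> norm (a - b) * \<eta>"
    proof (rule differentiable_bound_linearization[where S="cball b r" and f' = "\<lambda>y h. J y *v h"])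
      show "b + t *\<^sub>R (a - b) \<in> cball b r" if "t \<in> {0..1}" for t
      proof -
        have "t * norm (a - b) \<le> norm (a - b)" using that by (auto intro!: mult_left_le_one_le)
        then show ?thesis using that ab by (auto simp: dist_norm)
      qed
      show "((f has_derivative (\<lambda>h. J x *v h)) (at x within cball b r))" for x
        using f_deriv has_derivative_at_withinI by blast
      show "b \<in> cball b r" using r by auto
      show "onorm ((\<lambda>h. J x *v h) - (\<lambda>h. J b *v h)) \<le> \<eta>" if x: "x \<in> cball b r" for x
      proof -
        have eq: "(\<lambda>h. J x *v h) - (\<lambda>h. J b *v h) = (*v) (J x - J b)"
          by (rule ext) (simp add: matrix_vector_mult_diff_rdistrib)
        have "dist (J x) (J b) < \<eta> / C"
        proof -
          have "b \<in> cball b r" using r by simp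
          then have "x \<in> cball 0 (R+1)" "b \<in> cball 0 (R+1)" using x sub by blast+
          moreover have "dist x b < d" using x r by (simp add: dist_commute)
          ultimately show ?thesis using dJ[of b x] by (simp add: dist_commute)
        qed
        then have "C * norm (J x - J b) \<le> \<eta>" using C by (simp add: dist_norm field_simps)
        then show ?thesis unfolding eq using onorm_mat_le[of "J x - J b"] by (simp add: C_def)
      qed
    qed
    then show "norm (f a - f b - J b *v (a - b)) \<le> \<eta> * norm (a - b)" by (simp add: mult.commute)
  qed (use r in auto)
qed

theorem corollary3:
  fixes f :: "real^'n \<Rightarrow> real^'n"
    and J :: "real^'n \<Rightarrow> real^'n^'n"
    and g :: "real \<Rightarrow> real^'n \<Rightarrow> real \<Rightarrow> real^'n"
    and x0 :: "real \<Rightarrow> real^'n"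
    and x :: "real \<Rightarrow> real \<Rightarrow> real^'n"
    and \<Delta> :: "real \<Rightarrow> real"
    and z :: "real \<Rightarrow> real^'n"
    and T M \<epsilon>0 \<rho> :: real
  assumes f_deriv: "\<And>y. (f has_derivative (\<lambda>h. J y *v h)) (at y)"
    and J_cont: "continuous_on UNIV J"
    and g_cont: "continuous_on (UNIV \<times> UNIV \<times> {0..1}) (\<lambda>(t, y, e). g t y e)"
    and T_pos: "T > 0"
    and cycle: "limit_cycle f T x0"
    and nondeg: "nondegenerate J T x0"
    and M_pos: "M > 0" and eps0_pos: "\<epsilon>0 > 0"
    and x_sol: "\<And>\<epsilon> t. \<epsilon> \<in> {0<..\<epsilon>0} \<Longrightarrow>
        (x \<epsilon> has_vector_derivative (f (x \<epsilon> t) + \<epsilon> *\<^sub>R g t (x \<epsilon> t) \<epsilon>)) (at t)"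
    and x_per: "\<And>\<epsilon> t. \<epsilon> \<in> {0<..\<epsilon>0} \<Longrightarrow> x \<epsilon> (t + T) = x \<epsilon> t"
    and x_close: "\<And>\<epsilon> t. \<epsilon> \<in> {0<..\<epsilon>0} \<Longrightarrow> t \<in> {0..T} \<Longrightarrow>
        norm (x \<epsilon> (t + \<Delta> \<epsilon>) - x0 t) \<le> M * \<epsilon>"
    and \<Delta>_lim: "(\<Delta> \<longlongrightarrow> 0) (at_right 0)"
    and z_eig: "eigenfunction (\<lambda>t. - transpose (J (x0 t))) T z \<rho>"
    and z_nonper: "\<not> (\<forall>t. z (t + T) = z t)"
    and Mperp: "\<And>t. t \<in> {0..T} \<Longrightarrow>
        \<rho> / (\<rho> - 1) * integral {t - T..t} (\<lambda>s. z s \<bullet> g s (x0 s) 0) \<noteq> 0"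
  shows "\<exists>c1 c2. 0 < c1 \<and> c1 \<le> c2 \<and>
    (\<forall>\<^sub>F \<epsilon> in at_right 0. \<forall>t\<in>{0..T}.
        c1 * \<epsilon> \<le> norm (x \<epsilon> (t + \<Delta> \<epsilon>) - x0 t) \<and> norm (x \<epsilon> (t + \<Delta> \<epsilon>) - x0 t) \<le> c2 * \<epsilon>)"

proof -
  from cycle have x0d: "\<And>t. (x0 has_vector_derivative f (x0 t)) (at t)" and x0p: "\<And>t. x0 (t+T) = x0 t"
    unfolding limit_cycle_def periodic_solution_def by auto
  from z_eig have zne: "\<exists>t. z t \<noteq> 0"
    and zd: "\<And>t. (z has_vector_derivative ((- transpose (J (x0 t))) *v z t)) (at t)"
    and zp: "\<And>t. z (t+T) = \<rho> *\<^sub>R z t"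
    unfolding eigenfunction_def by auto
  have rho1: "\<rho> \<noteq> 1" using z_nonper zp by auto
  have rho0: "\<rho> \<noteq> 0"
  proof
    assume "\<rho> = 0"
    then have "z t = 0" for t using zp[where t="t - T"] by simp
    with zne show False by auto
  qed
  have x0c: "continuous_on UNIV x0"
    by (meson continuous_at_imp_continuous_on has_vector_derivative_continuous x0d)
  have zc: "continuous_on UNIV z"
    by (meson continuous_at_imp_continuous_on has_vector_derivative_continuous zd)
  define h where "h s = z s \<bullet> g s (x0 s) 0" for s
  have hc: "continuous_on UNIV h"
  proof -
    have "continuous_on UNIV (\<lambda>s. (s, x0 s, 0::real))" by (intro continuous_intros x0c)
    then have "continuous_on UNIV ((\<lambda>(t, y, e). g t y e) \<circ> (\<lambda>s. (s, x0 s, 0::real)))"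
      by (rule continuous_on_compose) (rule continuous_on_subset[OF g_cont], auto)
    then have "continuous_on UNIV (\<lambda>s. g s (x0 s) 0)" by (simp add: o_def)
    then show ?thesis unfolding h_def by (intro continuous_intros zc)
  qed
  define I where "I t = integral {t - T..t} h" for t
  have hint: "h integrable_on {a..b}" for a b
    by (rule integrable_continuous_interval) (rule continuous_on_subset[OF hc], simp)
  have Ic: "continuous_on {0..T} I"
  proof -
    have eq: "I t = integral {-T..t} h - integral {-T..t-T} h" if "t \<in> {0..T}" for t
      using Henstock_Kurzweil_Integration.integral_combine[where a="-T" and c="t-T" and b=t and f=h] hint that T_pos unfolding I_def by auto
    have c0: "continuous_on {-T..T} (\<lambda>t. integral {-T..t} h)"
      by (rule indefinite_integral_continuous_1[OF hint])
    have c1: "continuous_on {0..T} (\<lambda>t. integral {-T..t} h)"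
      by (rule continuous_on_subset[OF c0]) auto
    have c2: "continuous_on {0..T} (\<lambda>t. integral {-T..t-T} h)"
      by (rule continuous_on_compose2[OF c0, of _ "\<lambda>t. t - T"]) (auto intro!: continuous_intros)
    show ?thesis
      by (subst continuous_on_cong[OF refl eq]) (auto intro: continuous_on_diff c1 c2)
  qed
  define Mp where "Mp t = \<rho> / (\<rho> - 1) * I t" for t
  obtain m where m: "m > 0" "\<And>t. t \<in> {0..T} \<Longrightarrow> m \<le> \<bar>Mp t\<bar>"
  proof -
    have "continuous_on {0..T} (\<lambda>t. \<bar>Mp t\<bar>)" unfolding Mp_def by (intro continuous_intros Ic)
    then obtain t0 where t0: "t0 \<in> {0..T}" "\<And>t. t \<in> {0..T} \<Longrightarrow> \<bar>Mp t0\<bar> \<le> \<bar>Mp t\<bar>"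
      using continuous_attains_inf[of "{0..T}" "\<lambda>t. \<bar>Mp t\<bar>"] T_pos by auto
    have "Mp t0 \<noteq> 0" using Mperp[OF t0(1)] unfolding Mp_def I_def h_def .
    then show ?thesis using that[of "\<bar>Mp t0\<bar>"] t0 by auto
  qed
  obtain Z where Z: "Z > 0" "\<And>s. s \<in> {-T..T} \<Longrightarrow> norm (z s) \<le> Z"
  proof -
    have "bounded (z ` {-T..T})"
      by (rule compact_imp_bounded[OF compact_continuous_image[OF continuous_on_subset[OF zc] compact_Icc]]) auto
    then show ?thesis using that unfolding bounded_pos by auto
  qed
  obtain R0 where R0: "R0 > 0" "\<And>s. s \<in> {-T..T} \<Longrightarrow> norm (x0 s) \<le> R0"
  proof -
    have "bounded (x0 ` {-T..T})"
      by (rule compact_imp_bounded[OF compact_continuous_image[OF continuous_on_subset[OF x0c] compact_Icc]]) auto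
    then show ?thesis using that unfolding bounded_pos by auto
  qed
  define c where "c = \<bar>\<rho> / (\<rho> - 1)\<bar>"
  have c: "c > 0" using rho0 rho1 unfolding c_def by auto
  define \<delta> where "\<delta> = m / (2 * T * c)"
  have \<delta>: "\<delta> > 0" using m c T_pos unfolding \<delta>_def by auto
  have "compact (x0 ` {-T..T})"
    by (rule compact_continuous_image[OF continuous_on_subset[OF x0c] compact_Icc]) auto
  from linearization_uniform[OF f_deriv J_cont this, of "\<delta> / (2 * Z * M)"] \<delta> Z M_pos
  obtain r where r: "r > 0" "\<And>b a. b \<in> x0 ` {-T..T} \<Longrightarrow> norm (a - b) \<le> r \<Longrightarrow>
      norm (f a - f b - J b *v (a - b)) \<le> \<delta> / (2 * Z * M) * norm (a - b)"
    by auto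
  define S3 where "S3 = {-2*T..2*T} \<times> cball (0::real^'n) (R0+1) \<times> {0..(1::real)}"
  have "uniformly_continuous_on S3 (\<lambda>(t, y, e). g t y e)"
    by (rule compact_uniformly_continuous) (auto simp: S3_def intro!: compact_Times continuous_on_subset[OF g_cont])
  then have UC: "\<forall>e>0. \<exists>d>0. \<forall>p\<in>S3. \<forall>p'\<in>S3. dist p' p < d \<longrightarrow>
      dist ((\<lambda>(t, y, e). g t y e) p') ((\<lambda>(t, y, e). g t y e) p) < e"
    unfolding uniformly_continuous_on_def .
  have "\<delta> / (2 * Z) > 0" using \<delta> Z by simp
  from UC[rule_format, OF this] obtain dg where dg: "dg > 0" and dG: "\<And>p p'. p \<in> S3 \<Longrightarrow> p' \<in> S3 \<Longrightarrow>
      dist p' p < dg \<Longrightarrow> dist ((\<lambda>(t, y, e). g t y e) p') ((\<lambda>(t, y, e). g t y e) p) < \<delta> / (2 * Z)"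
    by blast
  define c1 where "c1 = min (m / (2 * Z)) M"
  have c1: "c1 > 0" "c1 \<le> M" using m Z M_pos unfolding c1_def by auto
  have key: "\<forall>t\<in>{0..T}. c1 * e \<le> norm (x e (t + \<Delta> e) - x0 t) \<and> norm (x e (t + \<Delta> e) - x0 t) \<le> M * e"
    if H: "0 < e" "e < \<epsilon>0" "e < 1" "M * e \<le> r" "M * e \<le> 1" "M * e < dg / 3" "e < dg / 3"
      "\<bar>\<Delta> e\<bar> < dg / 3" "\<bar>\<Delta> e\<bar> \<le> T" for e
  proof -
    define d where "d = \<Delta> e"
    have ein: "e \<in> {0<..\<epsilon>0}" using H by auto
    define u where "u s = x e (s + d) - x0 s" for s
    define w where "w s = z s \<bullet> u s" for s
    have ubd: "norm (u s) \<le> M * e" if s: "s \<in> {-T..T}" for s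
    proof (cases "s \<ge> 0")
      case True
      then show ?thesis using x_close[OF ein, of s] s unfolding u_def d_def by auto
    next
      case False
      then have "s + T \<in> {0..T}" using s by auto
      from x_close[OF ein this] have "norm (x e (s + T + d) - x0 (s + T)) \<le> M * e" unfolding d_def .
      moreover have "x e (s + T + d) = x e (s + d)" using x_per[OF ein, of "s + d"] by (simp add: add_ac)
      ultimately show ?thesis using x0p[of s] unfolding u_def by simp
    qed
    have uper: "u (s + T) = u s" for s
      using x_per[OF ein, of "s + d"] x0p[of s] unfolding u_def by (simp add: add_ac)
    have xed: "((\<lambda>s. x e (s + d)) has_vector_derivative (f (x e (s + d)) + e *\<^sub>R g (s + d) (x e (s + d)) e)) (at s)" for s
    proof -
      have "((\<lambda>s. s + d) has_vector_derivative 1) (at s)"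
        using has_real_derivative_iff_has_vector_derivative[THEN iffD1, OF DERIV_add[OF DERIV_ident DERIV_const]]
        by simp
      from vector_diff_chain_at[OF this x_sol[OF ein, of "s + d"]] show ?thesis by (simp add: o_def)
    qed
    have ud: "(u has_vector_derivative (f (x e (s + d)) + e *\<^sub>R g (s + d) (x e (s + d)) e - f (x0 s))) (at s)" for s
      unfolding u_def by (rule has_vector_derivative_diff[OF xed x0d])
    define D where "D s = z s \<bullet> (f (x e (s + d)) + e *\<^sub>R g (s + d) (x e (s + d)) e - f (x0 s))
        + ((- transpose (J (x0 s))) *v z s) \<bullet> u s" for s
    have wd: "(w has_vector_derivative D s) (at s)" for s
      unfolding w_def D_def by (rule vderiv_inner[OF zd ud])
    have Deq: "D s - e * h s = z s \<bullet> (f (x e (s + d)) - f (x0 s) - J (x0 s) *v u s)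
        + e * (z s \<bullet> (g (s + d) (x e (s + d)) e - g s (x0 s) 0))" for s
    proof -
      have "((- transpose (J (x0 s))) *v z s) \<bullet> u s = - (z s \<bullet> (J (x0 s) *v u s))"
        by (simp add: neg_mv dot_lmul_matrix)
      then show ?thesis unfolding D_def h_def by (simp add: inner_diff_right inner_add_right algebra_simps)
    qed
    have Dbd: "\<bar>D s - e * h s\<bar> \<le> \<delta> * e" if s: "s \<in> {-T..T}" for s
    proof -
      have us: "norm (u s) \<le> M * e" using ubd[OF s] .
      have A: "norm (f (x e (s + d)) - f (x0 s) - J (x0 s) *v u s) \<le> \<delta> * e / (2 * Z)"
      proof -
        have "norm (f (x e (s + d)) - f (x0 s) - J (x0 s) *v (x e (s + d) - x0 s))
            \<le> \<delta> / (2 * Z * M) * norm (x e (s + d) - x0 s)"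
          using r(2)[of "x0 s" "x e (s + d)"] s us H unfolding u_def by auto
        also have "\<dots> \<le> \<delta> / (2 * Z * M) * (M * e)"
          using us \<delta> Z M_pos unfolding u_def by (intro mult_left_mono) auto
        also have "\<dots> = \<delta> * e / (2 * Z)" using M_pos by (simp add: field_simps)
        finally show ?thesis unfolding u_def .
      qed
      have B: "norm (g (s + d) (x e (s + d)) e - g s (x0 s) 0) < \<delta> / (2 * Z)"
      proof -
        have n0: "norm (x0 s) \<le> R0" using R0(2)[OF s] .
        have "norm (x e (s + d)) \<le> norm (x0 s) + norm (u s)"
          unfolding u_def by (metis add.commute diff_add_cancel norm_triangle_ineq)
        then have n1: "norm (x e (s + d)) \<le> R0 + 1" using n0 us H by auto
        have p1: "(s, x0 s, 0) \<in> S3" using s n0 T_pos unfolding S3_def by auto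
        have p2: "(s + d, x e (s + d), e) \<in> S3" using s n1 H unfolding S3_def d_def by auto
        have "dist (s + d, x e (s + d), e) (s, x0 s, 0) = norm (d, u s, e)"
          unfolding dist_norm u_def by simp
        also have "\<dots> \<le> norm d + norm (u s, e)" by (rule norm_Pair_le)
        also have "\<dots> \<le> norm d + (norm (u s) + norm e)" using norm_Pair_le[of "u s" e] by simp
        also have "\<dots> < dg" using H us unfolding d_def by auto
        finally have "dist (s + d, x e (s + d), e) (s, x0 s, 0) < dg" .
        from dG[OF p1 p2 this] show ?thesis by (simp add: dist_norm)
      qed
      have "\<bar>D s - e * h s\<bar> \<le> \<bar>z s \<bullet> (f (x e (s + d)) - f (x0 s) - J (x0 s) *v u s)\<bar>
          + e * \<bar>z s \<bullet> (g (s + d) (x e (s + d)) e - g s (x0 s) 0)\<bar>"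
        unfolding Deq using H abs_triangle_ineq[of "z s \<bullet> (f (x e (s + d)) - f (x0 s) - J (x0 s) *v u s)"
            "e * (z s \<bullet> (g (s + d) (x e (s + d)) e - g s (x0 s) 0))"] by (simp add: abs_mult)
      also have "\<dots> \<le> Z * (\<delta> * e / (2 * Z)) + e * (Z * (\<delta> / (2 * Z)))"
      proof (rule add_mono)
        show "\<bar>z s \<bullet> (f (x e (s + d)) - f (x0 s) - J (x0 s) *v u s)\<bar> \<le> Z * (\<delta> * e / (2 * Z))"
        proof -
          have "\<bar>z s \<bullet> (f (x e (s + d)) - f (x0 s) - J (x0 s) *v u s)\<bar>
              \<le> norm (z s) * norm (f (x e (s + d)) - f (x0 s) - J (x0 s) *v u s)"
            by (rule Cauchy_Schwarz_ineq2)
          also have "\<dots> \<le> Z * (\<delta> * e / (2 * Z))"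
            by (rule mult_mono) (use Z(2)[OF s] A Z in auto)
          finally show ?thesis .
        qed
        have "\<bar>z s \<bullet> (g (s + d) (x e (s + d)) e - g s (x0 s) 0)\<bar> \<le> Z * (\<delta> / (2 * Z))"
        proof -
          have "\<bar>z s \<bullet> (g (s + d) (x e (s + d)) e - g s (x0 s) 0)\<bar>
              \<le> norm (z s) * norm (g (s + d) (x e (s + d)) e - g s (x0 s) 0)"
            by (rule Cauchy_Schwarz_ineq2)
          also have "\<dots> \<le> Z * (\<delta> / (2 * Z))"
            by (rule mult_mono) (use Z(2)[OF s] B Z in auto)
          finally show ?thesis .
        qed
        then show "e * \<bar>z s \<bullet> (g (s + d) (x e (s + d)) e - g s (x0 s) 0)\<bar> \<le> e * (Z * (\<delta> / (2 * Z)))"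
          using H by (intro mult_left_mono) auto
      qed
      also have "\<dots> = \<delta> * e" using Z by (simp add: field_simps)
      finally show ?thesis .
    qed
    show ?thesis
    proof
      fix t assume t: "t \<in> {0..T}"
      have tT: "t \<in> {-T..T}" using t T_pos by auto
      have FT: "(D has_integral (w t - w (t - T))) {t - T..t}"
        by (rule fundamental_theorem_of_calculus) (use T_pos in \<open>auto intro: has_vector_derivative_at_within[OF wd]\<close>)
      have hI: "(h has_integral I t) {t - T..t}"
        unfolding I_def by (rule integrable_integral[OF hint])
      have DI: "((\<lambda>s. D s - e * h s) has_integral (w t - w (t - T) - e * I t)) {t - T..t}"
        using has_integral_diff[OF FT has_integral_cmul[OF hI, of e]] by simp
      have "norm (w t - w (t - T) - e * I t) \<le> \<delta> * e * Henstock_Kurzweil_Integration.content (cbox (t - T) t)"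
      proof (rule has_integral_bound)
        show "0 \<le> \<delta> * e" using \<delta> H by simp
        show "((\<lambda>s. D s - e * h s) has_integral (w t - w (t - T) - e * I t)) (cbox (t - T) t)"
          using DI by simp
        show "norm (D s - e * h s) \<le> \<delta> * e" if "s \<in> cbox (t - T) t" for s
          using Dbd[of s] that t by auto
      qed
      then have bd: "\<bar>w t - w (t - T) - e * I t\<bar> \<le> \<delta> * e * T" using T_pos by simp
      have wT: "w t = \<rho> * w (t - T)"
        using zp[where t="t - T"] uper[of "t - T"] unfolding w_def by simp
      have "w t - w (t - T) - e * I t = ((\<rho> - 1) / \<rho>) * (w t - e * Mp t)"
      proof -
        have r1: "\<rho> - 1 \<noteq> 0" using rho1 by simp
        have "((\<rho> - 1) / \<rho>) * (w t - e * Mp t) = ((\<rho> - 1) / \<rho>) * w t - e * (((\<rho> - 1) / \<rho>) * (\<rho> / (\<rho> - 1))) * I t"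
        proof -
          have gen: "\<And>p q w e I::real. p * (w - e * (q * I)) = p * w - e * (p * q) * I" by algebra
          show ?thesis unfolding Mp_def by (rule gen)
        qed
        also have "((\<rho> - 1) / \<rho>) * (\<rho> / (\<rho> - 1)) = 1" using rho0 r1 by simp
        also have "((\<rho> - 1) / \<rho>) * w t = w t - w (t - T)" unfolding wT using rho0 by (simp add: field_simps)
        finally show ?thesis by simp
      qed
      with bd have "\<bar>(\<rho> - 1) / \<rho>\<bar> * \<bar>w t - e * Mp t\<bar> \<le> \<delta> * e * T" by (simp add: abs_mult)
      then have "c * (\<bar>(\<rho> - 1) / \<rho>\<bar> * \<bar>w t - e * Mp t\<bar>) \<le> c * (\<delta> * e * T)"
        using c by (intro mult_left_mono) auto
      moreover have "c * \<bar>(\<rho> - 1) / \<rho>\<bar> = 1"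
      proof -
        have e1: "c * \<bar>(\<rho> - 1) / \<rho>\<bar> = \<bar>\<rho> / (\<rho> - 1) * ((\<rho> - 1) / \<rho>)\<bar>"
          unfolding c_def by (rule abs_mult[symmetric])
        have e2: "\<rho> / (\<rho> - 1) * ((\<rho> - 1) / \<rho>) = 1" using rho0 rho1 by simp
        show ?thesis unfolding e1 e2 by simp
      qed
      ultimately have "\<bar>w t - e * Mp t\<bar> \<le> c * (\<delta> * e * T)"
        by (metis mult.assoc mult.left_neutral)
      also have "\<dots> = e * m / 2" using c T_pos unfolding \<delta>_def by (simp add: field_simps)
      finally have w1: "\<bar>w t - e * Mp t\<bar> \<le> e * m / 2" .
      have w2: "e * m / 2 \<le> \<bar>w t\<bar>"
      proof -
        have a: "e * m \<le> \<bar>e * Mp t\<bar>" using m(2)[OF t] H by (simp add: abs_mult)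
        have b: "\<bar>e * Mp t\<bar> \<le> \<bar>w t\<bar> + \<bar>w t - e * Mp t\<bar>" by (smt (verit))
        show ?thesis using a b w1 by linarith
      qed
      have w3: "\<bar>w t\<bar> \<le> Z * norm (u t)"
      proof -
        have "\<bar>w t\<bar> \<le> norm (z t) * norm (u t)" unfolding w_def by (rule Cauchy_Schwarz_ineq2)
        also have "\<dots> \<le> Z * norm (u t)" by (rule mult_right_mono) (use Z(2)[OF tT] in auto)
        finally show ?thesis .
      qed
      have "c1 * e \<le> m / (2 * Z) * e" using H unfolding c1_def by (intro mult_right_mono) auto
      also have "\<dots> = (e * m / 2) / Z" by simp
      also have "\<dots> \<le> (Z * norm (u t)) / Z" using w2 w3 Z by (intro divide_right_mono) auto
      also have "\<dots> = norm (u t)" using Z by simp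
      finally show "c1 * e \<le> norm (x e (t + \<Delta> e) - x0 t) \<and> norm (x e (t + \<Delta> e) - x0 t) \<le> M * e"
        using x_close[OF ein t] unfolding u_def d_def by simp
    qed
  qed
  have ev1: "\<forall>\<^sub>F e in at_right 0. 0 < e \<and> e < \<epsilon>0 \<and> e < 1 \<and> M * e \<le> r \<and> M * e \<le> 1 \<and> M * e < dg / 3 \<and> e < dg / 3"
  proof -
    define b where "b = min (min \<epsilon>0 1) (min (r / M) (min (1 / M) (min (dg / (3 * M)) (dg / 3))))"
    have b: "b > 0" unfolding b_def using eps0_pos r M_pos dg by auto
    show ?thesis
      unfolding eventually_at_right[OF zero_less_one]
    proof (rule exI[of _ b], rule conjI[OF b], intro allI impI)
      fix y :: real assume y: "0 < y" "y < b"
      then have y2: "y < \<epsilon>0" "y < 1" "y < r / M" "y < 1 / M" "y < dg / (3 * M)" "y < dg / 3"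
        by (auto simp: b_def)
      have "M * y < r" "M * y < 1" "M * y < dg / 3"
        using y2(3,4,5) M_pos by (simp_all add: pos_less_divide_eq ac_simps)
      then show "0 < y \<and> y < \<epsilon>0 \<and> y < 1 \<and> M * y \<le> r \<and> M * y \<le> 1 \<and> M * y < dg / 3 \<and> y < dg / 3"
        using y y2 by auto
    qed
  qed
  have ev2: "\<forall>\<^sub>F e in at_right 0. \<bar>\<Delta> e\<bar> < min (dg / 3) T"
  proof -
    have "min (dg / 3) T > 0" using dg T_pos by auto
    from \<Delta>_lim[unfolded tendsto_iff, rule_format, OF this] show ?thesis by simp
  qed
  have EV: "\<forall>\<^sub>F e in at_right 0. \<forall>t\<in>{0..T}. c1 * e \<le> norm (x e (t + \<Delta> e) - x0 t) \<and> norm (x e (t + \<Delta> e) - x0 t) \<le> M * e"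
    using eventually_conj[OF ev1 ev2]
  proof eventually_elim
    case (elim e)
    then show ?case by (intro key) auto
  qed
  show ?thesis by (intro exI[of _ c1] exI[of _ M] conjI c1 EV)
qed

end
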